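(* In the errorless symmetric relay network described in the context, for every policy $\pi$ and every time slot $t\ge1$, \[ \sum_{\tau=1}^{t-1}R(\mathcal{S}^{\pi}(\tau))\ \ge\ \sum_{\tau=1}^{t}R(\mathcal{U}^{\pi}(\tau)). \]
   Context: Fix integers $K\ge 2$ and $S,U$ with $1\le S<K$, $1\le U<K$, and $S=U$. There are $K$ processes indexed by $k\in\{1,\dots,K\}$ and time slots $t=1,2,\dots$. The state at time $t$ consists of relay AoI values $g_k(t)$ and destination AoI values $h_k(t)$, with $g_k(1)=h_k(1)=1$ for all $k$. A policy $\pi$ is a map assigning to the current state a pair $(\mathcal{S}^{\pi}(t),\mathcal{U}^{\pi}(t))$ of subsets of $\{1,\dots,K\}$ with $|\mathcal{S}^{\pi}(t)|=S$ and $|\mathcal{U}^{\pi}(t)|=U$. Errorless dynamics: $g_k(t+1)=1$ if $k\in\mathcal{S}(t)$, else $g_k(t+1)=g_k(t)+1$; $h_k(t+1)=g_k(t)+1$ if $k\in\mathcal{U}(t)$, else $h_k(t+1)=h_k(t)+1$. Write $g_k^\pi(t),h_k^\pi(t)$ for the sequences under $\pi$. Define $R(\mathcal{S}^{\pi}(\tau))=\sum_{k\in\mathcal{S}^{\pi}(\tau)} g_k^{\pi}(\tau)$ and $R(\mathcal{U}^{\pi}(\tau))=\sum_{k\in\mathcal{U}^{\pi}(\tau)}(h_k^{\pi}(\tau)-g_k^{\pi}(\tau))$; empty sums are $0$. *)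

theory Defs
  imports Main
begin

text \<open>States: relay AoI g and destination AoI h, as functions of the process index k
  (only indices k in {1..K} are meaningful). A policy maps the current state (g, h)
  to the pair (scheduled sampling set, scheduled update set).\<close>

type_synonym aoi = "nat \<Rightarrow> nat"
type_synonym policy = "aoi \<Rightarrow> aoi \<Rightarrow> nat set \<times> nat set"

definition valid_policy :: "nat \<Rightarrow> nat \<Rightarrow> nat \<Rightarrow> policy \<Rightarrow> bool" where
  "valid_policy K S U \<pi> \<longleftrightarrow>
     (\<forall>g h. fst (\<pi> g h) \<subseteq> {1..K} \<and> card (fst (\<pi> g h)) = S
          \<and> snd (\<pi> g h) \<subseteq> {1..K} \<and> card (snd (\<pi> g h)) = U)"

definition step :: "policy \<Rightarrow> aoi \<times> aoi \<Rightarrow> aoi \<times> aoi" where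
  "step \<pi> st =
     (let g = fst st; h = snd st; Ss = fst (\<pi> g h); Us = snd (\<pi> g h) in
      ((\<lambda>k. if k \<in> Ss then 1 else g k + 1),
       (\<lambda>k. if k \<in> Us then g k + 1 else h k + 1)))"

text \<open>traj pi n is the state at time slot t = n + 1.\<close>
primrec traj :: "policy \<Rightarrow> nat \<Rightarrow> aoi \<times> aoi" where
  "traj \<pi> 0 = ((\<lambda>k. 1), (\<lambda>k. 1))"
| "traj \<pi> (Suc n) = step \<pi> (traj \<pi> n)"

definition gA :: "policy \<Rightarrow> nat \<Rightarrow> aoi" where
  "gA \<pi> t = fst (traj \<pi> (t - 1))"

definition hA :: "policy \<Rightarrow> nat \<Rightarrow> aoi" where
  "hA \<pi> t = snd (traj \<pi> (t - 1))"

definition Sset :: "policy \<Rightarrow> nat \<Rightarrow> nat set" where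
  "Sset \<pi> t = fst (\<pi> (gA \<pi> t) (hA \<pi> t))"

definition Uset :: "policy \<Rightarrow> nat \<Rightarrow> nat set" where
  "Uset \<pi> t = snd (\<pi> (gA \<pi> t) (hA \<pi> t))"

definition RS :: "policy \<Rightarrow> nat \<Rightarrow> int" where
  "RS \<pi> t = (\<Sum>k\<in>Sset \<pi> t. int (gA \<pi> t k))"

definition RU :: "policy \<Rightarrow> nat \<Rightarrow> int" where
  "RU \<pi> t = (\<Sum>k\<in>Uset \<pi> t. int (hA \<pi> t k) - int (gA \<pi> t k))"

end

theory Submission
  imports Defs
begin

lemma traj_ge: "fst (traj \<pi> n) k \<le> snd (traj \<pi> n) k"
  by (induction n arbitrary: k) (auto simp: step_def Let_def)

definition Phi :: "nat \<Rightarrow> policy \<Rightarrow> nat \<Rightarrow> int" where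
  "Phi K \<pi> n = (\<Sum>k\<in>{1..K}. int (snd (traj \<pi> n) k) - int (fst (traj \<pi> n) k))"

lemma Phi_step:
  assumes "valid_policy K S U \<pi>"
  shows "Phi K \<pi> (Suc n) = Phi K \<pi> n + RS \<pi> (Suc n) - RU \<pi> (Suc n)"
proof -
  define g where "g = fst (traj \<pi> n)"
  define h where "h = snd (traj \<pi> n)"
  define Ss where "Ss = fst (\<pi> g h)"
  define Us where "Us = snd (\<pi> g h)"
  have sub: "Ss \<subseteq> {1..K}" "Us \<subseteq> {1..K}" using assms unfolding valid_policy_def Ss_def Us_def by auto
  have tr: "traj \<pi> (Suc n) = ((\<lambda>k. if k \<in> Ss then 1 else g k + 1),
       (\<lambda>k. if k \<in> Us then g k + 1 else h k + 1))"
    unfolding Ss_def Us_def g_def h_def by (simp add: step_def Let_def)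
  have RS: "RS \<pi> (Suc n) = (\<Sum>k\<in>Ss. int (g k))"
    by (simp add: RS_def Sset_def gA_def hA_def g_def h_def Ss_def)
  have RU: "RU \<pi> (Suc n) = (\<Sum>k\<in>Us. int (h k) - int (g k))"
    by (simp add: RU_def Uset_def gA_def hA_def g_def h_def Us_def)
  have pt: "\<And>k. int (snd (traj \<pi> (Suc n)) k) - int (fst (traj \<pi> (Suc n)) k)
     = (int (h k) - int (g k)) + (if k \<in> Ss then int (g k) else 0)
        - (if k \<in> Us then int (h k) - int (g k) else 0)"
    by (simp add: tr del: traj.simps)
  have "Phi K \<pi> (Suc n) = (\<Sum>k\<in>{1..K}. (int (h k) - int (g k)) + (if k \<in> Ss then int (g k) else 0)
        - (if k \<in> Us then int (h k) - int (g k) else 0))"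
    unfolding Phi_def using pt by simp
  also have "\<dots> = Phi K \<pi> n + (\<Sum>k\<in>{1..K}. if k \<in> Ss then int (g k) else 0)
        - (\<Sum>k\<in>{1..K}. if k \<in> Us then int (h k) - int (g k) else 0)"
    by (simp add: sum.distrib sum_subtractf Phi_def g_def h_def)
  also have "(\<Sum>k\<in>{1..K}. if k \<in> Ss then int (g k) else 0) = (\<Sum>k\<in>Ss. int (g k))"
    using sub by (simp add: sum.inter_restrict[symmetric] Int_absorb1 inf.absorb2)
  also have "(\<Sum>k\<in>{1..K}. if k \<in> Us then int (h k) - int (g k) else 0) = (\<Sum>k\<in>Us. int (h k) - int (g k))"
    using sub by (simp add: sum.inter_restrict[symmetric] Int_absorb1 inf.absorb2)
  finally show ?thesis using RS RU by simp
qed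

lemma Phi_sum:
  assumes "valid_policy K S U \<pi>"
  shows "Phi K \<pi> n = (\<Sum>\<tau>=1..n. RS \<pi> \<tau>) - (\<Sum>\<tau>=1..n. RU \<pi> \<tau>)"
proof (induction n)
  case 0 then show ?case by (simp add: Phi_def)
next
  case (Suc n) then show ?case using Phi_step[OF assms, of n] by simp
qed

theorem proposition1:
  fixes K S U t :: nat and \<pi> :: policy
  assumes "K \<ge> 2" and "1 \<le> S" and "S < K" and "1 \<le> U" and "U < K" and "S = U"
    and "valid_policy K S U \<pi>"
    and "t \<ge> 1"
  shows "(\<Sum>\<tau>=1..t-1. RS \<pi> \<tau>) \<ge> (\<Sum>\<tau>=1..t. RU \<pi> \<tau>)"
proof -
  obtain m where t: "t = Suc m" using assms(8) by (cases t) auto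
  have sub: "Uset \<pi> (Suc m) \<subseteq> {1..K}" using assms(7) unfolding valid_policy_def Uset_def by auto
  have "RU \<pi> (Suc m) = (\<Sum>k\<in>Uset \<pi> (Suc m). int (snd (traj \<pi> m) k) - int (fst (traj \<pi> m) k))"
    by (simp add: RU_def gA_def hA_def)
  also have "\<dots> \<le> Phi K \<pi> m" unfolding Phi_def
    by (rule sum_mono2) (use sub traj_ge in auto)
  finally have "RU \<pi> (Suc m) \<le> Phi K \<pi> m" .
  then show ?thesis using Phi_sum[OF assms(7), of m] t by simp
qed

end
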